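(* Let $(\Theta,D)$ be a matrix scheme. If the projection of preference of consequences in $(\Theta,D)$ is unique, then it coincides with domination on $D$.
   Context: A preference relation on a set $X$ is a binary relation $\prec$ on $X$ that is asymmetric ($x\prec y \Rightarrow$ not $y\prec x$) and negatively transitive (not $x\prec y$ and not $y\prec z$ $\Rightarrow$ not $x\prec z$). A matrix scheme is a pair $(\Theta,D)$ where $\Theta$ is an arbitrary nonempty set and $D$ is a set of real-valued functions on $\Theta$. Domination on $D$ is the relation $\prec$ defined by: $d_1\prec d_2$ iff $d_1(\theta)\le d_2(\theta)$ for all $\theta\in\Theta$ and $d_1(\theta^* )<d_2(\theta^* )$ for some $\theta^*\in\Theta$. A projection of preference of consequences in $(\Theta,D)$ is a preference relation $\prec^P$ on $D$ such that $d_1\prec d_2\Rightarrow d_1\prec^P d_2$ for all $d_1,d_2\in D$, where $\prec$ is domination. *)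

theory Defs
  imports Complex_Main
begin

(* The parameter set Theta is the (nonempty) type 'a; D is a set of real-valued
   functions on Theta. Relations on D are sets of pairs contained in D \<times> D. *)

definition preference_relation :: "'b set \<Rightarrow> ('b \<times> 'b) set \<Rightarrow> bool" where
  "preference_relation X R \<longleftrightarrow> R \<subseteq> X \<times> X
     \<and> (\<forall>x\<in>X. \<forall>y\<in>X. (x, y) \<in> R \<longrightarrow> (y, x) \<notin> R)
     \<and> (\<forall>x\<in>X. \<forall>y\<in>X. \<forall>z\<in>X. (x, y) \<notin> R \<and> (y, z) \<notin> R \<longrightarrow> (x, z) \<notin> R)"

definition dominates :: "('a \<Rightarrow> real) \<Rightarrow> ('a \<Rightarrow> real) \<Rightarrow> bool" where
  "dominates d1 d2 \<longleftrightarrow> (\<forall>\<theta>. d1 \<theta> \<le> d2 \<theta>) \<and> (\<exists>\<theta>. d1 \<theta> < d2 \<theta>)"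

definition domination :: "('a \<Rightarrow> real) set \<Rightarrow> (('a \<Rightarrow> real) \<times> ('a \<Rightarrow> real)) set" where
  "domination D = {(d1, d2). d1 \<in> D \<and> d2 \<in> D \<and> dominates d1 d2}"

definition projection_of_preference ::
  "('a \<Rightarrow> real) set \<Rightarrow> (('a \<Rightarrow> real) \<times> ('a \<Rightarrow> real)) set \<Rightarrow> bool" where
  "projection_of_preference D P \<longleftrightarrow> preference_relation D P
     \<and> (\<forall>d1\<in>D. \<forall>d2\<in>D. dominates d1 d2 \<longrightarrow> (d1, d2) \<in> P)"

end

theory Submission
  imports Defs
begin

theorem theorem1:
  fixes D :: "('a \<Rightarrow> real) set"
  assumes "\<exists>!P. projection_of_preference D P"
    and "projection_of_preference D P"
  shows "P = domination D"
proof (rule ccontr)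
  assume ne: "P \<noteq> domination D"
  have PD: "P \<subseteq> D \<times> D" and asym: "\<forall>x\<in>D. \<forall>y\<in>D. (x, y) \<in> P \<longrightarrow> (y, x) \<notin> P"
    and ntr: "\<forall>x\<in>D. \<forall>y\<in>D. \<forall>z\<in>D. (x, y) \<notin> P \<and> (y, z) \<notin> P \<longrightarrow> (x, z) \<notin> P"
    and dom: "\<forall>d1\<in>D. \<forall>d2\<in>D. dominates d1 d2 \<longrightarrow> (d1, d2) \<in> P"
    using assms(2) unfolding projection_of_preference_def preference_relation_def by blast+
  have sub: "domination D \<subseteq> P" using dom unfolding domination_def by blast
  have "\<not> P \<subseteq> domination D" using sub ne by blast
  then obtain a b where ab1: "(a,b) \<in> P" and nd: "(a,b) \<notin> domination D" by auto
  from ab1 PD have aD: "a \<in> D" "b \<in> D" by auto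
  from nd aD have ab2: "\<not> dominates a b" unfolding domination_def by simp
  have "\<exists>t. b t < a t"
  proof (rule ccontr)
    assume "\<not> (\<exists>t. b t < a t)"
    hence le: "\<forall>t. a t \<le> b t" by (simp add: not_less)
    have eq: "a t = b t" for t
    proof (rule ccontr)
      assume "a t \<noteq> b t"
      with le have "a t < b t" by (meson order_le_less)
      with le have "dominates a b" unfolding dominates_def by blast
      with ab2 show False by simp
    qed
    hence ab: "a = b" by (rule ext)
    have "(b,a) \<notin> P" using asym aD ab1 by blast
    with ab ab1 show False by simp
  qed
  then obtain t where t: "b t < a t" by blast
  define P' where "P' = {(x,y). x \<in> D \<and> y \<in> D \<and> (x t < y t \<or> (x t = y t \<and> (x,y) \<in> P))}"
  have P'iff: "(x,y) \<in> P' \<longleftrightarrow> x \<in> D \<and> y \<in> D \<and> (x t < y t \<or> (x t = y t \<and> (x,y) \<in> P))" for x y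
    unfolding P'_def by simp
  have pp': "projection_of_preference D P'"
    unfolding projection_of_preference_def preference_relation_def
  proof (intro conjI ballI impI)
    show "P' \<subseteq> D \<times> D" unfolding P'_def by auto
  next
    fix x y assume xy: "x \<in> D" "y \<in> D" "(x,y) \<in> P'"
    have "(x,y) \<in> P \<longrightarrow> (y,x) \<notin> P" using asym xy(1,2) by blast
    thus "(y,x) \<notin> P'" using xy(3) unfolding P'iff by auto
  next
    fix x y z assume xyz: "x \<in> D" "y \<in> D" "z \<in> D" "(x, y) \<notin> P' \<and> (y, z) \<notin> P'"
    have n: "(x, y) \<notin> P \<and> (y, z) \<notin> P \<longrightarrow> (x, z) \<notin> P" using ntr xyz(1-3) by blast
    have h1: "\<not> x t < y t" "x t = y t \<longrightarrow> (x,y) \<notin> P" using xyz unfolding P'iff by auto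
    have h2: "\<not> y t < z t" "y t = z t \<longrightarrow> (y,z) \<notin> P" using xyz unfolding P'iff by auto
    show "(x,z) \<notin> P'"
    proof
      assume "(x,z) \<in> P'"
      hence c: "x t < z t \<or> (x t = z t \<and> (x,z) \<in> P)" unfolding P'iff by blast
      show False
      proof (cases "x t = z t")
        case True
        with h1(1) h2(1) have e: "x t = y t" "y t = z t" by linarith+
        have "(x,y) \<notin> P" using h1(2) e(1) by simp
        moreover have "(y,z) \<notin> P" using h2(2) e(2) by simp
        ultimately have "(x,z) \<notin> P" using n by blast
        moreover have "(x,z) \<in> P" using c True by simp
        ultimately show False by simp
      next
        case False
        with c have "x t < z t" by blast
        with h1(1) h2(1) show False by linarith
      qed
    qed
  next
    fix x y assume xy: "x \<in> D" "y \<in> D" "dominates x y"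
    have 1: "(x,y) \<in> P" using dom xy by blast
    have 2: "x t \<le> y t" using xy(3) unfolding dominates_def by blast
    show "(x,y) \<in> P'" unfolding P'iff using 1 2 xy(1,2) by auto
  qed
  have nab: "(a,b) \<notin> P'" unfolding P'iff using t by auto
  have "P' = P"
  proof -
    from assms(1) obtain Q where Q: "\<And>R. projection_of_preference D R \<Longrightarrow> R = Q" by auto
    show ?thesis using Q[OF pp'] Q[OF assms(2)] by simp
  qed
  with nab ab1 show False by simp
qed

end
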